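(* Let $l$ be a positive integer such that for every $i\in\mathcal{V}$ there exist $l$ matrices in $\mathcal{M}$ (possibly repeated) whose product, in some order, has all entries of its column indexed by $i$ strictly positive. For $k\ge 1$ let $W_k=M_{(k-1)l+1}M_{(k-1)l+2}\cdots M_{kl}$. Then there exist constants $w>0$ and $d<1$ such that, for each $k\ge 1$, with probability equal to $w$ we have $\lambda(W_k)\le d$, and these events are independent for different $k$.
   Context: Let $\mathcal{G}=(\mathcal{V},\mathcal{E})$ be a strongly connected directed graph with $\mathcal{V}=\{1,\dots,m\}$, with a self-loop $(i,i)\in\mathcal{E}$ at every node. Let $\mathcal{O}_i=\{j:(i,j)\in\mathcal{E}\}$ and $D_i=|\mathcal{O}_i|$. At each time step $k\ge1$ each link $(i,j)\in\mathcal{E}$ is reliable with probability $q_{ij}\in(0,1]$, independently across links and across time steps; let $X_k[i,j]=1$ if $(i,j)$ is reliable at step $k$ and $0$ otherwise. Let $n=m+|\mathcal{E}|$ and index rows/columns of $n\times n$ matrices by $\mathcal{V}\cup\mathcal{E}$ (each link $(i,j)$ is an additional "virtual buffer" index). The random matrix $M_k$ is defined by: for $i\in\mathcal{V}$ and $(i,j)\in\mathcal{E}$, $M_k[i,j]=X_k[i,j]/D_i$ and $M_k[i,(i,j)]=(1-X_k[i,j])/D_i$, all other entries of row $i$ being $0$; for $(i,j)\in\mathcal{E}$, $M_k[(i,j),j]=X_k[i,j]$ and $M_k[(i,j),(i,j)]=1-X_k[i,j]$, all other entries of row $(i,j)$ being $0$. Each $M_k$ is row stochastic. $\mathcal{M}$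 denotes the finite set of all $2^{|\mathcal{E}|}$ matrices obtainable this way. For a row stochastic matrix $A$, $\lambda(A)=1-\min_{i_1,i_2}\sum_j\min(A[i_1,j],A[i_2,j])$. *)

theory Defs
  imports "HOL-Probability.Probability"
begin

text \<open>Row/column indices: nodes are Inl i (i in {1..m}), virtual buffers are Inr (i,j) for (i,j) in E.\<close>
type_synonym idx = "nat + nat \<times> nat"
type_synonym mat = "idx \<Rightarrow> idx \<Rightarrow> real"

definition index_set :: "nat \<Rightarrow> (nat \<times> nat) set \<Rightarrow> idx set" where
  "index_set m E = Inl ` {1..m} \<union> Inr ` E"

definition outdeg :: "(nat \<times> nat) set \<Rightarrow> nat \<Rightarrow> nat" where
  "outdeg E i = card {j. (i, j) \<in> E}"

text \<open>The matrix M determined by the reliability pattern X (X e = True iff link e is reliable).\<close>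
definition Mmat :: "(nat \<times> nat) set \<Rightarrow> (nat \<times> nat \<Rightarrow> bool) \<Rightarrow> mat" where
  "Mmat E X r c =
    (case r of
       Inl i \<Rightarrow>
         (case c of
            Inl j \<Rightarrow> (if (i, j) \<in> E \<and> X (i, j) then 1 / real (outdeg E i) else 0)
          | Inr (i', j) \<Rightarrow> (if i' = i \<and> (i, j) \<in> E \<and> \<not> X (i, j) then 1 / real (outdeg E i) else 0))
     | Inr (i, j) \<Rightarrow>
         (case c of
            Inl j' \<Rightarrow> (if j' = j \<and> X (i, j) then 1 else 0)
          | Inr e \<Rightarrow> (if e = (i, j) \<and> \<not> X (i, j) then 1 else 0)))"

definition Mset :: "(nat \<times> nat) set \<Rightarrow> mat set" where
  "Mset E = {Mmat E X | X. True}"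

definition matmul :: "idx set \<Rightarrow> mat \<Rightarrow> mat \<Rightarrow> mat" where
  "matmul I A B r c = (\<Sum>k\<in>I. A r k * B k c)"

definition idmat :: mat where
  "idmat r c = (if r = c then 1 else 0)"

fun matlist :: "idx set \<Rightarrow> mat list \<Rightarrow> mat" where
  "matlist I [] = idmat"
| "matlist I (A # As) = matmul I A (matlist I As)"

definition lam :: "idx set \<Rightarrow> mat \<Rightarrow> real" where
  "lam I A = 1 - Min ((\<lambda>(i1, i2). \<Sum>j\<in>I. min (A i1 j) (A i2 j)) ` (I \<times> I))"

definition Wmat :: "nat \<Rightarrow> (nat \<times> nat) set \<Rightarrow> nat \<Rightarrow> (nat \<Rightarrow> nat \<times> nat \<Rightarrow> 'w \<Rightarrow> bool) \<Rightarrow> nat \<Rightarrow> 'w \<Rightarrow> mat" where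
  "Wmat m E l X k \<omega> =
     matlist (index_set m E) (map (\<lambda>t. Mmat E (\<lambda>e. X ((k - 1) * l + t + 1) e \<omega>)) [0..<l])"

end

theory Submission imports Defs begin

lemma Mmat_nonneg: "Mmat E X r c \<ge> 0"
  unfolding Mmat_def by (auto split: sum.split prod.split)

lemma matlist_nonneg:
  assumes "\<forall>A\<in>set Ms. \<forall>r c. A r c \<ge> 0"
  shows "matlist I Ms r c \<ge> 0"
  using assms
proof (induction Ms arbitrary: r c)
  case Nil then show ?case by (simp add: idmat_def)
next
  case (Cons A As) then show ?case
    by (auto simp: matmul_def intro!: sum_nonneg mult_nonneg_nonneg)
qed

lemma Mset_nonneg: "set Ms \<subseteq> Mset E \<Longrightarrow> \<forall>A\<in>set Ms. \<forall>r c. A r c \<ge> 0"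
  unfolding Mset_def using Mmat_nonneg by blast

lemma Mmat_cong:
  assumes "\<forall>e\<in>E. X e = X' e" "r \<in> index_set m E"
  shows "Mmat E X r c = Mmat E X' r c"
  using assms unfolding Mmat_def index_set_def
  by (auto split: sum.split prod.split)

lemma matlist_cong:
  assumes "length As = length Bs" "\<forall>i<length As. \<forall>r\<in>I. \<forall>c. (As!i) r c = (Bs!i) r c" "r \<in> I"
  shows "matlist I As r c = matlist I Bs r c"
  using assms
proof (induction As arbitrary: Bs r c)
  case Nil then show ?case by simp
next
  case (Cons A As)
  then obtain B Bs' where Bs: "Bs = B # Bs'" by (cases Bs) auto
  have AB: "\<forall>r\<in>I. \<forall>c. A r c = B r c" using Cons.prems Bs by force
  have IH: "\<And>k c. k \<in> I \<Longrightarrow> matlist I As k c = matlist I Bs' k c"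
    apply (rule Cons.IH) using Cons.prems Bs by force+
  show ?case using Bs AB IH Cons.prems(3) by (auto simp: matmul_def intro!: sum.cong)
qed

lemma lam_cong:
  assumes "\<forall>r\<in>I. \<forall>c\<in>I. A r c = B r c"
  shows "lam I A = lam I B"
  unfolding lam_def using assms
  by (auto intro!: arg_cong[where f=Min] image_cong sum.cong)

definition gfun where
  "gfun m E l p = lam (index_set m E) (matlist (index_set m E) (map (\<lambda>t. Mmat E (p t)) [0..<l]))"

lemma gfun_cong:
  assumes "\<forall>t<l. \<forall>e\<in>E. p t e = p' t e"
  shows "gfun m E l p = gfun m E l p'"
  unfolding gfun_def
  apply (rule lam_cong)
  apply (intro ballI matlist_cong)
  using assms by (auto intro!: Mmat_cong)


locale netw =
  fixes m :: nat and E :: "(nat \<times> nat) set"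
  assumes E_sub: "E \<subseteq> {1..m} \<times> {1..m}"
    and loops: "\<forall>i\<in>{1..m}. (i, i) \<in> E"
begin

abbreviation "I \<equiv> index_set m E"
abbreviation "T \<equiv> Mmat E (\<lambda>_. True)"
abbreviation "Tn n \<equiv> matlist I (replicate n T)"

lemma finE: "finite E"
  using E_sub finite_subset by blast

lemma finI: "finite I"
  unfolding index_set_def using finE by auto

lemma Tn_nonneg: "Tn n r c \<ge> 0"
  by (rule matlist_nonneg) (auto intro: Mmat_nonneg)

lemma Tn_Suc: "Tn (Suc n) r c = (\<Sum>k\<in>I. T r k * Tn n k c)"
  by (simp add: matmul_def)

lemma Tn_ge: "k \<in> I \<Longrightarrow> T r k * Tn n k c \<le> Tn (Suc n) r c"
  unfolding Tn_Suc
  by (rule member_le_sum) (auto intro!: mult_nonneg_nonneg Mmat_nonneg Tn_nonneg finI)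

lemma Tn_buffer:
  assumes "(a, b) \<in> E"
  shows "Tn (Suc n) (Inr (a, b)) c = Tn n (Inl b) c"
proof -
  have b: "Inl b \<in> I" using assms E_sub unfolding index_set_def by auto
  have "Tn (Suc n) (Inr (a, b)) c = (\<Sum>k\<in>I. if k = Inl b then Tn n k c else 0)"
    unfolding Tn_Suc
    by (rule sum.cong) (auto simp: Mmat_def split: sum.split)
  also have "\<dots> = Tn n (Inl b) c" using b finI by simp
  finally show ?thesis .
qed

lemma Tn0_col: "Tn 0 (Inr x) (Inl i) = 0"
  by (simp add: idmat_def)

lemma T_node:
  assumes "(a, j) \<in> E"
  shows "T (Inl a) (Inl j) > 0"
proof -
  have "finite {j. (a, j) \<in> E}"
    by (rule finite_subset[of _ "snd ` E"]) (force, simp add: finE)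
  then have "outdeg E a > 0" unfolding outdeg_def using assms
    by (auto simp: card_gt_0_iff)
  then show ?thesis using assms by (simp add: Mmat_def)
qed

lemma Tn_self:
  assumes "j \<in> {1..m}" "Tn n (Inl j) c > 0"
  shows "Tn (Suc n) (Inl j) c > 0"
proof -
  have "Inl j \<in> I" using assms unfolding index_set_def by auto
  moreover have "T (Inl j) (Inl j) > 0" using T_node loops assms by blast
  ultimately show ?thesis using Tn_ge[of "Inl j" "Inl j" n c] assms
    by (smt (verit) mult_pos_pos)
qed

lemma Tn_buf_pos:
  assumes "(a, b) \<in> E" "Tn n (Inr (a, b)) (Inl i) > 0"
  shows "Tn n (Inl b) (Inl i) > 0"
proof (cases n)
  case 0 then show ?thesis using assms Tn0_col by simp
next
  case (Suc n')
  then have "Tn n' (Inl b) (Inl i) > 0" using assms Tn_buffer by simp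
  moreover have "b \<in> {1..m}" using assms E_sub by auto
  ultimately show ?thesis using Suc Tn_self by blast
qed

lemma main_pos:
  assumes "set Ms \<subseteq> Mset E" "r \<in> I" "matlist I Ms r (Inl i) > 0"
  shows "Tn (length Ms) r (Inl i) > 0"
  using assms
proof (induction Ms arbitrary: r)
  case Nil then show ?case by simp
next
  case (Cons A As)
  let ?c = "Inl i"
  let ?n = "length As"
  obtain X where A: "A = Mmat E X" using Cons.prems unfolding Mset_def by auto
  have nn: "\<forall>k. matlist I As k ?c \<ge> 0"
    using Cons.prems Mset_nonneg matlist_nonneg by (metis set_subset_Cons subset_trans)
  have "0 < (\<Sum>k\<in>I. A r k * matlist I As k ?c)" using Cons.prems by (simp add: matmul_def)
  then obtain k where k: "k \<in> I" "A r k * matlist I As k ?c > 0"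
    by (metis (no_types, lifting) not_less sum_nonpos)
  have Ark: "A r k > 0" and Bk: "matlist I As k ?c > 0"
    using k nn A Mmat_nonneg by (metis linorder_not_le mult_nonneg_nonpos mult_nonpos_nonneg)+
  have IH: "Tn ?n k ?c > 0" using Cons.IH[OF _ k(1) Bk] Cons.prems by auto
  show ?case
  proof (cases r)
    case (Inl a)
    show ?thesis
    proof (cases k)
      case (Inl j)
      with Ark A \<open>r = Inl a\<close> have "(a, j) \<in> E" by (auto simp: Mmat_def split: if_splits)
      then have "T r k > 0" using T_node Inl \<open>r = Inl a\<close> by simp
      then show ?thesis using Tn_ge[OF k(1), of r ?n ?c] IH
        by (simp, smt (verit) mult_pos_pos)
    next
      case (Inr e)
      then obtain a' j where e: "k = Inr (a', j)" by (cases e) auto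
      with Ark A \<open>r = Inl a\<close> have aj: "a' = a" "(a, j) \<in> E" by (auto simp: Mmat_def split: if_splits)
      then have "Tn ?n (Inl j) ?c > 0" using Tn_buf_pos IH e by simp
      moreover have "j \<in> {1..m}" using aj E_sub by auto
      ultimately have "Tn (Suc ?n) (Inl j) ?c > 0" using Tn_self by blast
      have "Inl j \<in> I" using \<open>j \<in> {1..m}\<close> unfolding index_set_def by auto
      have "T r (Inl j) > 0" using T_node aj \<open>r = Inl a\<close> by simp
      have "Tn ?n (Inl j) ?c > 0" by fact
      then show ?thesis using Tn_ge[OF \<open>Inl j \<in> I\<close>, of r ?n ?c] \<open>T r (Inl j) > 0\<close>
        by (simp, smt (verit) mult_pos_pos)
    qed
  next
    case (Inr e)
    then obtain a b where r: "r = Inr (a, b)" by (cases e) auto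
    have ab: "(a, b) \<in> E" using Cons.prems(2) r unfolding index_set_def by auto
    show ?thesis
    proof (cases k)
      case (Inl j)
      with Ark A r have "j = b" by (auto simp: Mmat_def split: if_splits)
      then show ?thesis using IH Tn_buffer[OF ab] r Inl by simp
    next
      case (Inr e')
      with Ark A r have "e' = (a, b)" by (auto simp: Mmat_def split: if_splits)
      then have "Tn ?n (Inl b) ?c > 0" using Tn_buf_pos[OF ab] IH Inr by simp
      then show ?thesis using Tn_buffer[OF ab] r by simp
    qed
  qed
qed

lemma lam_lt1:
  assumes "i \<in> {1..m}" "\<forall>r\<in>I. A r (Inl i) > 0" "\<forall>r c. A r c \<ge> 0"
  shows "lam I A < 1"
proof -
  have iI: "Inl i \<in> I" using assms unfolding index_set_def by auto
  have ne: "I \<times> I \<noteq> {}" using iI by auto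
  have "\<forall>x\<in>(\<lambda>(i1, i2). \<Sum>j\<in>I. min (A i1 j) (A i2 j)) ` (I \<times> I). x > 0"
  proof
    fix x assume "x \<in> (\<lambda>(i1, i2). \<Sum>j\<in>I. min (A i1 j) (A i2 j)) ` (I \<times> I)"
    then obtain i1 i2 where x: "x = (\<Sum>j\<in>I. min (A i1 j) (A i2 j))" "i1 \<in> I" "i2 \<in> I" by auto
    have "min (A i1 (Inl i)) (A i2 (Inl i)) \<le> (\<Sum>j\<in>I. min (A i1 j) (A i2 j))"
      by (rule member_le_sum) (auto simp: iI finI assms(3))
    moreover have "min (A i1 (Inl i)) (A i2 (Inl i)) > 0" using assms x by auto
    ultimately show "x > 0" using x by linarith
  qed
  then have "Min ((\<lambda>(i1, i2). \<Sum>j\<in>I. min (A i1 j) (A i2 j)) ` (I \<times> I)) > 0"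
    using ne finI by (subst Min_gr_iff) auto
  then show ?thesis unfolding lam_def by simp
qed

end


lemma (in prob_space) indep_reindex:
  assumes "indep_vars (\<lambda>_. count_space UNIV) Y I'" "inj_on h J" "h ` J \<subseteq> I'" "finite J" "J \<noteq> {}"
  shows "prob (\<Inter>j\<in>J. Y (h j) -` A j \<inter> space M) = (\<Prod>j\<in>J. prob (Y (h j) -` A j \<inter> space M))"
proof -
  let ?A = "\<lambda>i. A (the_inv_into J h i)"
  have "prob (\<Inter>i\<in>h`J. Y i -` ?A i \<inter> space M) = (\<Prod>i\<in>h`J. prob (Y i -` ?A i \<inter> space M))"
    by (rule indep_varsD[OF assms(1)]) (use assms in auto)
  then show ?thesis using assms by (simp add: prod.reindex the_inv_into_f_f)
qed

lemma PiM_bool_sets: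
  assumes "finite K" "S \<subseteq> space (PiM K (\<lambda>_. count_space (UNIV::bool set)))"
  shows "S \<in> sets (PiM K (\<lambda>_. count_space (UNIV::bool set)))"
proof -
  have sp: "space (PiM K (\<lambda>_. count_space (UNIV::bool set))) = PiE K (\<lambda>_. UNIV)"
    by (simp add: space_PiM)
  have fin: "finite S" by (rule finite_subset[OF assms(2)]) (simp add: sp finite_PiE assms(1))
  have "S = (\<Union>f\<in>S. PiE K (\<lambda>i. {f i}))"
  proof (intro equalityI subsetI)
    fix x assume "x \<in> S" then show "x \<in> (\<Union>f\<in>S. PiE K (\<lambda>i. {f i}))" using assms sp by (auto simp: PiE_iff)
  next
    fix x assume "x \<in> (\<Union>f\<in>S. PiE K (\<lambda>i. {f i}))"
    then obtain f where f: "f \<in> S" "x \<in> PiE K (\<lambda>i. {f i})" by auto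
    have "f \<in> extensional K" using f assms sp by (auto simp: PiE_iff)
    then have "x = f" using f(2) PiE_singleton by blast
    then show "x \<in> S" using f by simp
  qed
  also have "\<dots> \<in> sets (PiM K (\<lambda>_. count_space (UNIV::bool set)))"
    using fin assms(1) by (intro sets.finite_UN sets_PiM_I_finite) auto
  finally show ?thesis .
qed


theorem lemma1:
  fixes m l :: nat and E :: "(nat \<times> nat) set" and q :: "nat \<times> nat \<Rightarrow> real"
    and P :: "'w measure" and X :: "nat \<Rightarrow> nat \<times> nat \<Rightarrow> 'w \<Rightarrow> bool"
  assumes m_pos: "m \<ge> 1"
    and E_sub: "E \<subseteq> {1..m} \<times> {1..m}"
    and strong: "\<forall>i\<in>{1..m}. \<forall>j\<in>{1..m}. (i, j) \<in> E\<^sup>*"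
    and loops: "\<forall>i\<in>{1..m}. (i, i) \<in> E"
    and q_range: "\<forall>e\<in>E. 0 < q e \<and> q e \<le> 1"
    and P: "prob_space P"
    and indep: "prob_space.indep_vars P (\<lambda>_. count_space UNIV) (\<lambda>(k, e). X k e) ({1..} \<times> E)"
    and distr: "\<forall>k\<ge>1. \<forall>e\<in>E. measure P {\<omega> \<in> space P. X k e \<omega>} = q e"
    and l_pos: "l > 0"
    and hyp: "\<forall>i\<in>{1..m}. \<exists>Ms. length Ms = l \<and> set Ms \<subseteq> Mset E \<and>
               (\<forall>r\<in>index_set m E. matlist (index_set m E) Ms r (Inl i) > 0)"
  shows "\<exists>w d. w > 0 \<and> d < 1 \<and>
           (\<forall>k\<ge>1. measure P {\<omega> \<in> space P. lam (index_set m E) (Wmat m E l X k \<omega>) \<le> d} = w) \<and>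
           prob_space.indep_events P
             (\<lambda>k. {\<omega> \<in> space P. lam (index_set m E) (Wmat m E l X k \<omega>) \<le> d}) {1..}"
proof -
  interpret prob_space P by (rule P)
  interpret N: netw m E using E_sub loops by unfold_locales
  let ?I = "index_set m E"
  define d where "d = gfun m E l (\<lambda>_ _. True)"
  have d_lt: "d < 1"
  proof -
    obtain Ms where Ms: "length Ms = l" "set Ms \<subseteq> Mset E"
      "\<forall>r\<in>?I. matlist ?I Ms r (Inl 1) > 0"
      using hyp m_pos atLeastAtMost_iff le_refl by (metis (no_types, lifting))
    have "\<forall>r\<in>?I. N.Tn l r (Inl 1) > 0" using N.main_pos Ms by metis
    moreover have "d = lam ?I (N.Tn l)"
      unfolding d_def gfun_def by (simp add: map_replicate_const)
    ultimately show ?thesis using N.lam_lt1[of 1 "N.Tn l"] m_pos N.Tn_nonneg by auto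
  qed
  define Xv where "Xv = (\<lambda>(k, e). X k e)"
  define J where "J = {0..<l} \<times> E"
  define h where "h k = (\<lambda>(t::nat, e::nat \<times> nat). ((k - 1) * l + t + 1, e))" for k :: nat
  define Fp where "Fp = {f \<in> PiE J (\<lambda>_. UNIV). gfun m E l (\<lambda>t e. f (t, e)) \<le> d}"
  define B where "B k f = {\<omega> \<in> space P. \<forall>j\<in>J. Xv (h k j) \<omega> = f j}" for k f
  define pr where "pr f = (\<Prod>j\<in>J. if f j then q (snd j) else 1 - q (snd j))" for f :: "nat \<times> nat \<times> nat \<Rightarrow> bool"
  define w where "w = (\<Sum>f\<in>Fp. pr f)"
  define ev where "ev k = {\<omega> \<in> space P. lam ?I (Wmat m E l X k \<omega>) \<le> d}" for k
  have finJ: "finite J" using N.finE unfolding J_def by auto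
  have E11: "(1, 1) \<in> E" using loops m_pos by auto
  have Jne: "J \<noteq> {}" using E11 l_pos unfolding J_def by auto
  have finFp: "finite Fp"
    by (rule finite_subset[of Fp "PiE J (\<lambda>_. UNIV)"]) (auto simp: Fp_def intro!: finite_PiE finJ)
  have lamW: "lam ?I (Wmat m E l X k \<omega>) = gfun m E l (\<lambda>t e. X ((k - 1) * l + t + 1) e \<omega>)" for k \<omega>
    unfolding Wmat_def gfun_def by simp
  have rv: "random_variable (count_space UNIV) (Xv i)" if "i \<in> {1..} \<times> E" for i
    using indep that unfolding indep_vars_def Xv_def by blast
  have hJ: "h k ` J \<subseteq> {1..} \<times> E" for k unfolding h_def J_def by auto
  have hinj: "inj_on (h k) J" for k unfolding h_def J_def inj_on_def by auto
  have ev_eq: "ev k = (\<Union>f\<in>Fp. B k f)" for k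
  proof (intro equalityI subsetI)
    fix \<omega> assume w: "\<omega> \<in> ev k"
    let ?f = "restrict (\<lambda>j. Xv (h k j) \<omega>) J"
    have "gfun m E l (\<lambda>t e. ?f (t, e)) = gfun m E l (\<lambda>t e. X ((k - 1) * l + t + 1) e \<omega>)"
      by (rule gfun_cong) (auto simp: J_def h_def Xv_def)
    then have "?f \<in> Fp" using w unfolding Fp_def ev_def lamW by auto
    moreover have "\<omega> \<in> B k ?f" using w unfolding B_def ev_def by auto
    ultimately show "\<omega> \<in> (\<Union>f\<in>Fp. B k f)" by blast
  next
    fix \<omega> assume "\<omega> \<in> (\<Union>f\<in>Fp. B k f)"
    then obtain f where f: "f \<in> Fp" "\<omega> \<in> B k f" by auto
    have "gfun m E l (\<lambda>t e. f (t, e)) = gfun m E l (\<lambda>t e. X ((k - 1) * l + t + 1) e \<omega>)"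
      by (rule gfun_cong) (use f in \<open>auto simp: J_def h_def Xv_def B_def\<close>)
    then show "\<omega> \<in> ev k" using f unfolding Fp_def ev_def lamW B_def by auto
  qed
  have B_int: "B k f = (\<Inter>j\<in>J. Xv (h k j) -` {f j} \<inter> space P)" for k f
    unfolding B_def using Jne by auto
  have B_sets: "B k f \<in> events" if "k \<ge> 1" for k f
    unfolding B_int using Jne finJ hJ
    by (intro sets.finite_INT measurable_sets[OF rv]) auto
  have disj: "disjoint_family_on (B k) Fp" for k
    unfolding disjoint_family_on_def
  proof (intro ballI impI)
    fix f g assume fg: "f \<in> Fp" "g \<in> Fp" "f \<noteq> g"
    show "B k f \<inter> B k g = {}"
    proof (rule ccontr)
      assume "B k f \<inter> B k g \<noteq> {}"
      then have "\<forall>j\<in>J. f j = g j" unfolding B_def by auto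
      then have "f = g" using fg unfolding Fp_def by (auto intro: PiE_ext)
      then show False using fg by simp
    qed
  qed
  have prB: "prob (B k f) = pr f" if "k \<ge> 1" for k f
  proof -
    have "prob (B k f) = (\<Prod>j\<in>J. prob (Xv (h k j) -` {f j} \<inter> space P))"
      unfolding B_int by (rule indep_reindex[OF indep[folded Xv_def] hinj hJ finJ Jne])
    also have "\<dots> = pr f" unfolding pr_def
    proof (rule prod.cong[OF refl])
      fix j assume j: "j \<in> J"
      obtain t e where te: "j = (t, e)" by (cases j) auto
      let ?k = "(k - 1) * l + t + 1"
      have eE: "e \<in> E" using j te J_def by auto
      have XX: "Xv (h k j) = X ?k e" using te by (simp add: h_def Xv_def)
      have pq: "prob {\<omega> \<in> space P. X ?k e \<omega>} = q e" using distr eE by auto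
      have evt: "{\<omega> \<in> space P. X ?k e \<omega>} \<in> events"
      proof -
        have "X ?k e -` {True} \<inter> space P \<in> events"
          using rv[of "h k j"] hJ j XX by (intro measurable_sets) auto
        moreover have "X ?k e -` {True} \<inter> space P = {\<omega> \<in> space P. X ?k e \<omega>}" by auto
        ultimately show ?thesis by simp
      qed
      show "prob (Xv (h k j) -` {f j} \<inter> space P) = (if f j then q (snd j) else 1 - q (snd j))"
      proof (cases "f j")
        case True
        have "Xv (h k j) -` {f j} \<inter> space P = {\<omega> \<in> space P. X ?k e \<omega>}" using True XX by auto
        then show ?thesis using True pq te by simp
      next
        case False
        have "Xv (h k j) -` {f j} \<inter> space P = space P - {\<omega> \<in> space P. X ?k e \<omega>}" using False XX by auto
        then show ?thesis using False pq te prob_compl[OF evt] by simp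
      qed
    qed
    finally show ?thesis .
  qed
  have meas: "measure P (ev k) = w" if "k \<ge> 1" for k
  proof -
    have "measure P (ev k) = (\<Sum>f\<in>Fp. prob (B k f))"
      unfolding ev_eq using finFp disj B_sets that
      by (intro measure_finite_Union) (auto simp: emeasure_eq_measure)
    then show ?thesis unfolding w_def using prB that by simp
  qed
  have w_pos: "w > 0"
  proof -
    let ?f0 = "restrict (\<lambda>_. True) J"
    have "gfun m E l (\<lambda>t e. ?f0 (t, e)) = d"
      unfolding d_def by (rule gfun_cong) (auto simp: J_def)
    then have f0: "?f0 \<in> Fp" unfolding Fp_def by auto
    have pnn: "pr f \<ge> 0" for f unfolding pr_def
      using q_range J_def by (intro prod_nonneg) auto
    have "pr ?f0 = (\<Prod>j\<in>J. q (snd j))" unfolding pr_def by (intro prod.cong) auto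
    also have "\<dots> > 0" using q_range J_def by (intro prod_pos) auto
    finally have "pr ?f0 > 0" .
    moreover have "pr ?f0 \<le> w" unfolding w_def
      by (rule member_le_sum[of "?f0" Fp pr, OF f0 pnn finFp])
    ultimately show ?thesis by simp
  qed
  define K where "K k = {(k - 1) * l + 1 .. k * l} \<times> E" for k
  have Ksub: "K k \<subseteq> {1..} \<times> E" if "k \<in> {1..}" for k unfolding K_def by auto
  have Kdisj: "disjoint_family_on K {1..}"
    unfolding disjoint_family_on_def
  proof (intro ballI impI)
    fix a b :: nat assume ab: "a \<in> {1..}" "b \<in> {1..}" "a \<noteq> b"
    have *: "a * l < (b - 1) * l + 1" if "a < b" for a b :: nat
    proof -
      have "a \<le> b - 1" using that by auto
      then have "a * l \<le> (b - 1) * l" by (rule mult_le_mono1)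
      then show ?thesis by linarith
    qed
    show "K a \<inter> K b = {}" unfolding K_def
      using *[of a b] *[of b a] ab by (cases "a < b") auto
  qed
  have ind2: "indep_vars (\<lambda>k. PiM (K k) (\<lambda>_. count_space UNIV)) (\<lambda>k \<omega>. restrict (\<lambda>i. Xv i \<omega>) (K k)) {1..}"
    by (rule indep_vars_restrict[OF indep[folded Xv_def] Ksub Kdisj])
  have finK: "finite (K k)" for k unfolding K_def using N.finE by auto
  have ie: "indep_events (\<lambda>k. {\<omega> \<in> space P. (\<lambda>y. gfun m E l (\<lambda>t e. y ((k - 1) * l + t + 1, e)) \<le> d)
              (restrict (\<lambda>i. Xv i \<omega>) (K k))}) {1..}"
    by (rule indep_eventsI_indep_vars[OF ind2]) (intro PiM_bool_sets finK, auto)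
  have "indep_events ev {1..}"
    unfolding indep_events_def_alt
  proof (subst indep_sets_cong[OF refl])
    fix k :: nat assume k: "k \<in> {1..}"
    have "ev k = {\<omega> \<in> space P. (\<lambda>y. gfun m E l (\<lambda>t e. y ((k - 1) * l + t + 1, e)) \<le> d)
              (restrict (\<lambda>i. Xv i \<omega>) (K k))}"
    proof -
      have "gfun m E l (\<lambda>t e. restrict (\<lambda>i. Xv i \<omega>) (K k) ((k - 1) * l + t + 1, e))
          = gfun m E l (\<lambda>t e. X ((k - 1) * l + t + 1) e \<omega>)" for \<omega>
      proof (rule gfun_cong, intro allI impI ballI)
        fix t e assume "t < l" "e \<in> E"
        moreover have "(k - 1) * l + t + 1 \<le> k * l"
        proof -
          have "k * l = (k - 1) * l + l" using k by (cases k) auto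
          then show ?thesis using \<open>t < l\<close> by simp
        qed
        ultimately show "restrict (\<lambda>i. Xv i \<omega>) (K k) ((k - 1) * l + t + 1, e) = X ((k - 1) * l + t + 1) e \<omega>"
          unfolding K_def Xv_def by auto
      qed
      then show ?thesis unfolding ev_def lamW by simp
    qed
    then show "{ev k} = {{\<omega> \<in> space P. (\<lambda>y. gfun m E l (\<lambda>t e. y ((k - 1) * l + t + 1, e)) \<le> d)
              (restrict (\<lambda>i. Xv i \<omega>) (K k))}}" by simp
  next
    show "indep_sets (\<lambda>k. {{\<omega> \<in> space P. (\<lambda>y. gfun m E l (\<lambda>t e. y ((k - 1) * l + t + 1, e)) \<le> d)
              (restrict (\<lambda>i. Xv i \<omega>) (K k))}}) {1..}"
      using ie unfolding indep_events_def_alt .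
  qed
  then show ?thesis using w_pos d_lt meas unfolding ev_def by blast
qed

end
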